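(* Let $p$ be an odd prime and $r\ge1$ odd. (i) If $p\equiv -1\pmod 8$, then $K=\begin{pmatrix}\frac{4}{p^r}&1\\1&\frac{p^r+1}{4}\end{pmatrix}^{-1}$ is an even integral positive-definite matrix whose lattice has discriminant form isometric to $A_{p^r}$ (and signature $2$). (ii) If $p\equiv -3\pmod 8$, then $K=\begin{pmatrix}\frac4{p^r}&1&0&0\\1&\frac{p^r+3}{4}&1&0\\0&1&2&1\\0&0&1&2\end{pmatrix}^{-1}$ is an even integral positive-definite matrix whose lattice has discriminant form isometric to $A_{p^r}$ (signature $4$). (iii) If $p\equiv 3\pmod 8$, then $K=\begin{pmatrix}\frac{2}{p^r}&1\\1&\frac{p^r+1}{2}\end{pmatrix}^{-1}$ is an even integral positive-definite matrix whose lattice has discriminant form isometric to $B_{p^r}$ (signature $2$). (iv) For every even $r\ge 2$, $K=\begin{pmatrix}\frac{3}{2^r}&1&0\\1&\frac{2^r+2}{3}&1\\0&1&2\end{pmatrix}^{-1}$ is an even integral positive-definite matrix whose lattice has discriminant form isometric to $D_{2^r}$ (signature $3$).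
   Context: For an even positive-definite integral symmetric $n\times n$ matrix $K$, the lattice $L=\mathbb{Z}^n$ with form $x^TKy$ has discriminant group $L^*/L\cong\mathbb{Z}^n/K\mathbb{Z}^n$ and discriminant form $q_L(x+L)=\tfrac12 x^TKx\in\mathbb{Q}/\mathbb{Z}$ for $x\in L^*=K^{-1}\mathbb{Z}^n$ (in coordinates, $q_L$ of the class of $K^{-1}e_i$ is $\tfrac12(K^{-1})_{ii}$). Metric groups: $A_{p^r}=(\mathbb{Z}/p^r, mx^2/p^r)$ with $\gcd(m,p)=1$, $\left(\frac{2m}{p}\right)=1$; $B_{p^r}=(\mathbb{Z}/p^r, nx^2/p^r)$ with $\gcd(n,p)=1$, $\left(\frac{2n}{p}\right)=-1$; $D_{2^r}=(\mathbb{Z}/2^r,-5x^2/2^{r+1})$. *)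

theory Defs
  imports "HOL-Analysis.Analysis" "HOL-Number_Theory.Number_Theory"
begin

text \<open>Lattice L = Z^n with Gram matrix K (an n x n real matrix, n given by the index type).\<close>

definition int_vec :: "real^'n \<Rightarrow> bool" where
  "int_vec x \<longleftrightarrow> (\<forall>i. x $ i \<in> \<int>)"

definition even_integral_sym :: "real^'n^'n \<Rightarrow> bool" where
  "even_integral_sym K \<longleftrightarrow> transpose K = K \<and> (\<forall>i j. K $ i $ j \<in> \<int>) \<and> (\<forall>i. K $ i $ i / 2 \<in> \<int>)"

definition pos_def :: "real^'n^'n \<Rightarrow> bool" where
  "pos_def K \<longleftrightarrow> (\<forall>x. x \<noteq> 0 \<longrightarrow> x \<bullet> (K *v x) > 0)"

definition dual_lattice :: "real^'n^'n \<Rightarrow> (real^'n) set" where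
  "dual_lattice K = {x. int_vec (K *v x)}"

text \<open>Discriminant quadratic form q_L(x + L) = x^T K x / 2 (taken mod 1).\<close>
definition disc_q :: "real^'n^'n \<Rightarrow> real^'n \<Rightarrow> real" where
  "disc_q K x = (x \<bullet> (K *v x)) / 2"

text \<open>The discriminant form of K is isometric to the cyclic metric group (Z/N, c x^2 mod 1):
  there is a map phi from Z to L^* (representatives) inducing a group isomorphism
  Z/N -> L^*/L that carries c x^2 mod 1 to q_L.\<close>
definition disc_iso_cyclic :: "real^'n^'n \<Rightarrow> int \<Rightarrow> real \<Rightarrow> bool" where
  "disc_iso_cyclic K N c \<longleftrightarrow>
     (\<exists>\<phi> :: int \<Rightarrow> real^'n.
        (\<forall>k. \<phi> k \<in> dual_lattice K) \<and>
        (\<forall>k l. int_vec (\<phi> (k + l) - \<phi> k - \<phi> l)) \<and>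
        (\<forall>k l. int_vec (\<phi> k - \<phi> l) \<longleftrightarrow> [k = l] (mod N)) \<and>
        (\<forall>x \<in> dual_lattice K. \<exists>k. int_vec (x - \<phi> k)) \<and>
        (\<forall>k. disc_q K (\<phi> k) - c * (of_int k)^2 \<in> \<int>))"

definition iso_A :: "real^'n^'n \<Rightarrow> nat \<Rightarrow> nat \<Rightarrow> bool" where
  "iso_A K p r \<longleftrightarrow> (\<exists>m::int. coprime m (int p) \<and> Legendre (2*m) (int p) = 1 \<and>
      disc_iso_cyclic K (int p ^ r) (of_int m / real p ^ r))"

definition iso_B :: "real^'n^'n \<Rightarrow> nat \<Rightarrow> nat \<Rightarrow> bool" where
  "iso_B K p r \<longleftrightarrow> (\<exists>n::int. coprime n (int p) \<and> Legendre (2*n) (int p) = -1 \<and>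
      disc_iso_cyclic K (int p ^ r) (of_int n / real p ^ r))"

definition iso_D :: "real^'n^'n \<Rightarrow> nat \<Rightarrow> bool" where
  "iso_D K r \<longleftrightarrow> disc_iso_cyclic K (2 ^ r) (-5 / 2 ^ (r + 1))"

end

theory Submission
  imports Defs
begin


lemma inv_eq:
  fixes A B :: "real^'n^'n"
  assumes "A ** B = mat 1"
  shows "invertible A" "matrix_inv A = B" "B ** A = mat 1"
proof -
  have BA: "B ** A = mat 1" using assms matrix_left_right_inverse by blast
  show "invertible A" unfolding invertible_def using assms BA by blast
  show "B ** A = mat 1" by (rule BA)
  have ex: "\<exists>A'. A ** A' = mat 1 \<and> A' ** A = mat 1" using assms BA by blast
  have "\<forall>A'. A ** A' = mat 1 \<and> A' ** A = mat 1 \<longrightarrow> A' = B"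
    by (metis BA matrix_mul_assoc matrix_mul_lid matrix_mul_rid)
  then show "matrix_inv A = B" unfolding matrix_inv_def
    by (metis (mono_tags, lifting) ex someI_ex)
qed

lemma posdef_from_inv:
  fixes M K :: "real^'n^'n"
  assumes MK: "M ** K = mat 1"
    and pos: "\<And>y. y \<noteq> 0 \<Longrightarrow> y \<bullet> (M *v y) > 0"
  shows "pos_def K"
  unfolding pos_def_def
proof (intro allI impI)
  fix x :: "real^'n" assume x: "x \<noteq> 0"
  define y where "y = K *v x"
  have xy: "x = M *v y" unfolding y_def by (simp add: matrix_vector_mul_assoc MK)
  have "y \<noteq> 0" using x xy by auto
  then have "y \<bullet> (M *v y) > 0" by (rule pos)
  moreover have "x \<bullet> (K *v x) = y \<bullet> (M *v y)"
    using xy y_def by (simp add: inner_commute)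
  ultimately show "x \<bullet> (K *v x) > 0" by simp
qed



lemma of_int_div_Ints_iff:
  fixes x N :: int assumes "N > 0"
  shows "(of_int x / of_int N :: real) \<in> \<int> \<longleftrightarrow> N dvd x"
proof
  assume "(of_int x / of_int N :: real) \<in> \<int>"
  then obtain z where z: "(of_int x / of_int N :: real) = of_int z" by (auto elim: Ints_cases)
  then have "(of_int x :: real) = of_int (N * z)" using assms by (simp add: field_simps)
  then have "x = N * z" by (simp only: of_int_eq_iff)
  then show "N dvd x" by simp
next
  assume "N dvd x" then obtain z where "x = N * z" by auto
  then show "(of_int x / of_int N :: real) \<in> \<int>" using assms by simp
qed

lemma mv_axis: "(M :: real^'n^'n) *v axis jj s = (\<chi> i. s * M$i$jj)"
  by (simp add: vec_eq_iff matrix_vector_mult_def axis_def if_distrib[where f="\<lambda>z. _ * z"] mult.commute cong: if_cong)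

lemma disc_generic:
  fixes M K :: "real^'n^'n" and jj :: 'n and N t a :: int and c :: real
  assumes MK: "M ** K = mat 1"
    and N: "N > 0"
    and m11: "M$jj$jj = of_int t / of_int N"
    and col: "\<And>i. i \<noteq> jj \<Longrightarrow> M$i$jj \<in> \<int>"
    and oth: "\<And>i j. j \<noteq> jj \<Longrightarrow> M$i$j \<in> \<int>"
    and cop: "coprime (a*t) N"
    and cval: "of_int a ^ 2 * M$jj$jj / 2 - c \<in> \<int>"
  shows "disc_iso_cyclic K N c"
proof -
  have KM: "K ** M = mat 1" using MK matrix_left_right_inverse by blast
  define w where "w = (\<lambda>k::int. axis jj (of_int (a*k) :: real))"
  define \<phi> where "\<phi> = (\<lambda>k. M *v w k)"
  have Kphi: "K *v \<phi> k = w k" for k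
    by (simp add: \<phi>_def matrix_vector_mul_assoc KM)
  have phi_comp: "\<phi> k $ i = of_int (a*k) * M$i$jj" for k i
    by (simp add: \<phi>_def w_def mv_axis)
  have intw: "int_vec (w k)" for k
    by (simp add: int_vec_def w_def axis_def)
  have A1: "\<forall>k. \<phi> k \<in> dual_lattice K"
    by (simp add: dual_lattice_def Kphi intw)
  have A2: "\<forall>k l. int_vec (\<phi> (k + l) - \<phi> k - \<phi> l)"
    by (simp add: int_vec_def phi_comp algebra_simps)
  have A3: "int_vec (\<phi> k - \<phi> l) \<longleftrightarrow> [k = l] (mod N)" for k l
  proof -
    have "int_vec (\<phi> k - \<phi> l) \<longleftrightarrow> (\<forall>i. of_int (a*(k-l)) * M$i$jj \<in> \<int>)"
      by (simp add: int_vec_def phi_comp algebra_simps)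
    also have "\<dots> \<longleftrightarrow> of_int (a*(k-l)) * M$jj$jj \<in> \<int>"
      using col by (metis Ints_mult Ints_of_int)
    also have "\<dots> \<longleftrightarrow> (of_int (a*t*(k-l)) / of_int N :: real) \<in> \<int>"
    proof -
      have "of_int (a*(k-l)) * M$jj$jj = (of_int (a*t*(k-l)) / of_int N :: real)"
        by (simp add: m11)
      then show ?thesis by (simp only:)
    qed
    also have "\<dots> \<longleftrightarrow> N dvd (a*t*(k-l))" by (rule of_int_div_Ints_iff[OF N])
    also have "\<dots> \<longleftrightarrow> N dvd (k-l)"
      using cop by (metis coprime_commute coprime_dvd_mult_right_iff)
    also have "\<dots> \<longleftrightarrow> [k = l] (mod N)" by (simp add: cong_iff_dvd_diff)
    finally show ?thesis .
  qed
  have A4: "\<forall>x \<in> dual_lattice K. \<exists>k. int_vec (x - \<phi> k)"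
  proof
    fix x assume "x \<in> dual_lattice K"
    then have iv: "int_vec (K *v x)" by (simp add: dual_lattice_def)
    define v where "v = K *v x"
    have xv: "x = M *v v" by (simp add: v_def matrix_vector_mul_assoc MK)
    obtain z where z: "v $ jj = of_int z" using iv unfolding int_vec_def v_def by (metis Ints_cases)
    have "coprime a N" using cop by simp
    then obtain b where b: "[a * b = 1] (mod N)"
      by (metis cong_solve_coprime_int)
    then obtain y where y: "1 - a*b = N*y"
      by (metis cong_iff_dvd_diff cong_sym dvdE)
    define k where "k = b * z"
    define u where "u = v - w k"
    have "x - \<phi> k = M *v u" by (simp add: xv \<phi>_def u_def matrix_vector_mult_diff_distrib)
    have ujj: "u $ jj = of_int (z * (N * y))"
      by (simp add: u_def w_def z k_def y[symmetric] algebra_simps)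
    have uo: "j \<noteq> jj \<Longrightarrow> u $ j \<in> \<int>" for j
      using iv by (simp add: u_def w_def v_def int_vec_def axis_def)
    have prod: "M$i$j * u$j \<in> \<int>" for i j
    proof (cases "j = jj")
      case True
      show ?thesis
      proof (cases "i = jj")
        case True
        have "M$i$j * u$j = of_int (t * z * y)" using N \<open>j = jj\<close> True
          by (simp add: m11 ujj)
        then show ?thesis by simp
      next
        case False
        then show ?thesis using col[OF False] \<open>j = jj\<close> ujj by simp
      qed
    next
      case False
      then show ?thesis using oth[OF False] uo[OF False] by simp
    qed
    have "int_vec (M *v u)"
      unfolding int_vec_def matrix_vector_mult_def using prod by (simp add: Ints_sum)
    then show "\<exists>k. int_vec (x - \<phi> k)" using \<open>x - \<phi> k = M *v u\<close> by metis
  qed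
  have A5: "disc_q K (\<phi> k) - c * (of_int k)^2 \<in> \<int>" for k
  proof -
    have "\<phi> k \<bullet> (K *v \<phi> k) = (\<Sum>i\<in>UNIV. \<phi> k $ i * w k $ i)"
      by (simp add: inner_vec_def Kphi)
    also have "\<dots> = \<phi> k $ jj * of_int (a*k)"
      by (simp add: w_def axis_def if_distrib[where f="\<lambda>z. _ * z"] cong: if_cong)
    finally have "disc_q K (\<phi> k) - c * (of_int k)^2 = (of_int k)^2 * (of_int a ^ 2 * M$jj$jj / 2 - c)"
      by (simp add: disc_q_def phi_comp power2_eq_square algebra_simps)
    then show ?thesis using cval by simp
  qed
  show ?thesis unfolding disc_iso_cyclic_def
    using A1 A2 A3 A4 A5 by blast
qed



lemma cop2: assumes "prime p" "odd p" shows "coprime (2::int) (int p)"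
  by (metis assms(2) int_eq_iff_numeral coprime_int_iff two_is_prime prime_imp_coprime)

lemma leg4: assumes "prime p" "odd p" shows "Legendre 4 (int p) = 1"
proof -
  have "\<not> [4 = 0] (mod int p)"
  proof
    assume "[4 = 0] (mod int p)"
    then have "int p dvd int 4" by (simp add: cong_0_iff)
    then have d: "p dvd 4" by (simp only: int_dvd_int_iff)
    then have "p \<le> 4" by (simp add: dvd_imp_le)
    moreover have "p \<ge> 2" using assms(1) prime_ge_2_nat by blast
    ultimately have "p = 3" using assms(2) by presburger
    then show False using d by simp
  qed
  moreover have "QuadRes (int p) 4" unfolding QuadRes_def
    by (rule exI[of _ 2]) simp
  ultimately show ?thesis by (simp add: Legendre_def)
qed

lemma sq2adic: "K \<ge> 3 \<Longrightarrow> \<exists>a::int. odd a \<and> 2^K dvd 3*a^2+5"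
proof (induction K rule: dec_induct)
  case base
  show ?case by (rule exI[of _ 1]) simp
next
  case (step k)
  then obtain a m :: int where a: "odd a" "3*a^2+5 = 2^k*m" by blast
  show ?case
  proof (cases "even m")
    case True
    then obtain m' where "m = 2*m'" by blast
    then show ?thesis using a by (intro exI[of _ a]) (simp add: power_Suc)
  next
    case False
    define a' where "a' = a + 2^(k-1)"
    have "even (m + 3*a)" using False a(1) by simp
    then obtain n where n: "m + 3*a = 2*n" by blast
    have e: "2*k-2 = Suc k + (k - 3)" using step.hyps by arith
    have kk: "(2::int)^(2*k-2) = 2^(Suc k) * 2^(k-3)"
      by (simp only: e power_add)
    have "(2::int)^(k-1) * 2^(k-1) = 2^(2*k-2)" by (simp flip: power_add)
    moreover have "(2::int)^(k-1) * 2 = 2^k" using step.hyps by (metis Suc_diff_1 power_Suc2 less_le_trans numeral_less_iff le_numeral_extra(4) not_less_eq_eq zero_less_numeral le0 neq0_conv  one_less_numeral_iff semiring_norm(76) zero_less_diff Suc_le_lessD)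
    moreover have "3*a'^2+5 = (3*a^2+5) + 3*a*(2^(k-1)*2) + 3*(2^(k-1)*2^(k-1))"
      by (simp add: a'_def power2_eq_square algebra_simps)
    ultimately have "3*a'^2+5 = 2^k*(m+3*a) + 3 * 2^(2*k-2)"
      using a(2) by (simp add: algebra_simps)
    also have "\<dots> = 2^(Suc k) * (n + 3*2^(k-3))" unfolding n kk by (simp add: algebra_simps)
    finally have "2^(Suc k) dvd 3*a'^2+5" by simp
    moreover have "odd a'" using a(1) step.hyps by (simp add: a'_def)
    ultimately show ?thesis by blast
  qed
qed



lemma leg2: assumes "prime p" "[int p = 3] (mod 8)" shows "Legendre 2 (int p) = -1"
proof -
  obtain k where pk: "int p = 8*k+3"
    using assms(2) by (metis cong_iff_dvd_diff cong_sym dvdE diff_eq_eq add.commute)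
  have k0: "k \<ge> 0" using pk by linarith
  have p2: "2 < p" using pk k0 by linarith
  have nz: "\<not> [2 = 0] (mod int p)"
  proof
    assume "[2 = 0] (mod int p)"
    then have "int p dvd int 2" by (simp add: cong_0_iff)
    then have "p dvd 2" by (simp only: int_dvd_int_iff)
    then have "p \<le> 2" by (simp add: dvd_imp_le)
    then show False using p2 by linarith
  qed
  interpret G: GAUSS p 2 using assms(1) p2 nz by unfold_locales auto
  have h: "(int p - 1) div 2 = 4*k+1" using pk by simp
  have C: "G.C = (\<lambda>x. x*2) ` {0<..4*k+1}"
    unfolding G.C_def G.B_def G.A_def h
    unfolding image_image
  proof (rule image_cong[OF refl])
    fix x assume "x \<in> {0<..4*k+1}"
    then have "0 \<le> x*2" "x*2 < int p" using pk by auto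
    then show "x * 2 mod int p = x * 2" by simp
  qed
  have E: "G.E = (\<lambda>x. x*2) ` {2*k+1..4*k+1}"
    unfolding G.E_def C h
  proof (intro equalityI subsetI)
    fix y assume "y \<in> (\<lambda>x. x*2) ` {0<..4*k+1} \<inter> {4*k+1<..}"
    then obtain x where "y = x*2" "x \<in> {0<..4*k+1}" "x*2 > 4*k+1" by auto
    then show "y \<in> (\<lambda>x. x*2) ` {2*k+1..4*k+1}" by auto
  next
    fix y assume "y \<in> (\<lambda>x. x*2) ` {2*k+1..4*k+1}"
    then obtain x where "y = x*2" "x \<in> {2*k+1..4*k+1}" by auto
    then show "y \<in> (\<lambda>x. x*2) ` {0<..4*k+1} \<inter> {4*k+1<..}" using k0 by auto
  qed
  have "card G.E = card {2*k+1..4*k+1}"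
    unfolding E by (rule card_image) (simp add: inj_on_def)
  also have "\<dots> = nat (2*k+1)" by simp
  finally have cE: "card G.E = Suc (2 * nat k)" using k0 by linarith
  have "Legendre 2 (int p) = (-1) ^ card G.E" by (rule G.gauss_lemma)
  also have "\<dots> = -1" unfolding cE by simp
  finally show ?thesis .
qed



lemma pos2:
  fixes Q a b :: real assumes Q: "Q > 0" and nz: "a \<noteq> 0 \<or> b \<noteq> 0"
  shows "4/Q*a^2 + 2*a*b + (Q+1)/4*b^2 > 0"
proof -
  have eq: "4/Q*a^2 + 2*a*b + (Q+1)/4*b^2 = (2*a + Q*b/2)^2/Q + b^2/4"
    using Q by (simp add: field_simps power2_eq_square)
  show ?thesis
  proof (cases "b = 0")
    case True
    then have "a \<noteq> 0" using nz by simp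
    then show ?thesis using eq True Q by simp
  next
    case False
    have "(2*a + Q*b/2)^2/Q \<ge> 0" using Q by simp
    moreover have "b^2/4 > 0" using False by simp
    ultimately show ?thesis using eq by linarith
  qed
qed

lemma cop4: assumes "prime p" "odd p" shows "coprime (4::int) (int p ^ r)"
proof -
  have "coprime (4::int) (int p)" using coprime_power_left_iff[of "2::int" 2 "int p"] cop2[OF assms] by simp
  then show ?thesis by simp
qed

lemma part1:
  fixes p r :: nat
  assumes pr: "prime p" and po: "odd p" and ro: "odd r" and c8: "[int p = -1] (mod 8)"
  shows "(let M = vector [vector [4 / real p ^ r, 1],
                       vector [1, (real p ^ r + 1) / 4]] :: real^2^2;
           K = matrix_inv M
       in invertible M \<and> even_integral_sym K \<and> pos_def K \<and> iso_A K p r)"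
proof -
  have "[int p ^ r = (-1)^r] (mod 8)" by (rule cong_pow[OF c8])
  then have "[int p ^ r = -1] (mod 8)" using ro by simp
  then have "8 dvd int p ^ r + 1" by (simp add: cong_iff_dvd_diff)
  then obtain j where j: "int p ^ r + 1 = 8*j" by blast
  define Q where "Q = real p ^ r"
  have Qj: "Q = 8 * of_int j - 1"
  proof -
    have "Q = of_int (int p ^ r)" by (simp add: Q_def)
    also have "\<dots> = of_int (8*j - 1)"
    proof -
      have "int p ^ r = 8*j - 1" using j by linarith
      then show ?thesis by (simp only:)
    qed
    finally show ?thesis by simp
  qed
  have ppos: "p > 0" using pr prime_gt_0_nat by blast
  have Qpos: "Q > 0" using ppos by (simp add: Q_def)
  define M where "M = (vector [vector [4 / Q, 1], vector [1, (Q + 1) / 4]] :: real^2^2)"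
  define K where "K = (vector [vector [Q*(Q+1)/4, -Q], vector [-Q, 4]] :: real^2^2)"
  have MK: "M ** K = mat 1" using Qpos
    by (simp add: M_def K_def vec_eq_iff forall_2 matrix_matrix_mult_def sum_2 mat_def field_simps)
  have inv: "invertible M" "matrix_inv M = K" using inv_eq[OF MK] by auto
  have e1: "Q*(Q+1)/4 = of_int ((8*j-1)*(2*j))" by (simp add: Qj field_simps)
  have e2: "Q*(Q+1)/4/2 = of_int ((8*j-1)*j)" by (simp add: Qj field_simps)
  have e3: "(Q+1)/4 = of_int (2*j)" by (simp add: Qj field_simps)
  have eis: "even_integral_sym K"
    unfolding even_integral_sym_def
    by (simp add: K_def vec_eq_iff forall_2 transpose_def e1 e2 Qj)
  have pd: "pos_def K"
  proof (rule posdef_from_inv[OF MK])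
    fix y :: "real^2" assume "y \<noteq> 0"
    then have nz: "y$1 \<noteq> 0 \<or> y$2 \<noteq> 0" by (simp add: vec_eq_iff forall_2)
    have "y \<bullet> (M *v y) = 4/Q*(y$1)^2 + 2*(y$1)*(y$2) + (Q+1)/4*(y$2)^2"
      by (simp add: M_def inner_vec_def sum_2 matrix_vector_mult_def power2_eq_square algebra_simps)
    then show "y \<bullet> (M *v y) > 0" using pos2[OF Qpos nz] by simp
  qed
  have iso: "iso_A K p r"
    unfolding iso_A_def
  proof (intro exI conjI)
    show "coprime (2::int) (int p)" by (rule cop2[OF pr po])
    show "Legendre (2*2) (int p) = 1" using leg4[OF pr po] by simp
    show "disc_iso_cyclic K (int p ^ r) (of_int 2 / real p ^ r)"
    proof (rule disc_generic[OF MK, where jj=1 and t=4 and a=1])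
      show "int p ^ r > 0" using ppos by simp
      show "M$1$1 = of_int 4 / of_int (int p ^ r)" by (simp add: M_def Q_def)
      show "M$i$1 \<in> \<int>" if "i \<noteq> 1" for i
        using that exhaust_2[of i] by (auto simp: M_def)
      show "M$i$j \<in> \<int>" if "j \<noteq> 1" for i j
        using that exhaust_2[of i] exhaust_2[of j] by (auto simp: M_def e3)
      show "coprime (1*4) (int p ^ r)" using cop4[OF pr po] by simp
      show "(of_int 1)^2 * M$1$1 / 2 - of_int 2 / real p ^ r \<in> \<int>"
        by (simp add: M_def Q_def)
    qed
  qed
  show ?thesis unfolding Let_def Q_def[symmetric] M_def[symmetric] inv
    using inv eis pd iso by blast
qed



lemma vector_4 [simp]:
 "(vector [x,y,z,w] ::('a::zero)^4)$1 = x"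
 "(vector [x,y,z,w] ::('a::zero)^4)$2 = y"
 "(vector [x,y,z,w] ::('a::zero)^4)$3 = z"
 "(vector [x,y,z,w] ::('a::zero)^4)$4 = w"
  unfolding vector_def by simp_all

lemma pow3: assumes "odd r" shows "[(3::int)^r = 3] (mod 8)"
proof -
  obtain s where s: "r = 2 * s + 1" using assms oddE by blast
  have "[(9::int)^s = 1^s] (mod 8)" by (rule cong_pow) (simp add: cong_def)
  then have "[(3::int) * 9^s = 3 * 1] (mod 8)" by (intro cong_mult) auto
  moreover have "(3::int)^r = 3 * 9^s" by (simp add: s power_mult power_add)
  ultimately show ?thesis by simp
qed

lemma pos4:
  fixes Q a b c d :: real assumes Q: "Q > 0" and nz: "a \<noteq> 0 \<or> b \<noteq> 0 \<or> c \<noteq> 0 \<or> d \<noteq> 0"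
  shows "4/Q*a^2 + 2*a*b + (Q+3)/4*b^2 + 2*b*c + 2*c^2 + 2*c*d + 2*d^2 > 0"
proof -
  have eq: "4/Q*a^2 + 2*a*b + (Q+3)/4*b^2 + 2*b*c + 2*c^2 + 2*c*d + 2*d^2
      = (2*a + Q*b/2)^2/Q + 3/4*(b + 4/3*c)^2 + 2/3*(c + 3/2*d)^2 + d^2/2"
    using Q by (simp add: field_simps power2_eq_square)
  have t1: "(2*a + Q*b/2)^2/Q \<ge> 0" using Q by simp
  have t2: "3/4*(b + 4/3*c)^2 \<ge> 0" by simp
  have t3: "2/3*(c + 3/2*d)^2 \<ge> 0" by simp
  have t4: "d^2/2 \<ge> 0" by simp
  consider "d \<noteq> 0" | "d = 0" "c \<noteq> 0" | "d = 0" "c = 0" "b \<noteq> 0" | "d = 0" "c = 0" "b = 0" "a \<noteq> 0"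
    using nz by blast
  then show ?thesis
  proof cases
    case 1 then have "d^2/2 > 0" by simp
    then show ?thesis using eq t1 t2 t3 by linarith
  next
    case 2 then have "2/3*(c + 3/2*d)^2 > 0" by simp
    then show ?thesis using eq t1 t2 t4 by linarith
  next
    case 3 then have "3/4*(b + 4/3*c)^2 > 0" by simp
    then show ?thesis using eq t1 t3 t4 by linarith
  next
    case 4 then have "(2*a + Q*b/2)^2/Q > 0" using Q by simp
    then show ?thesis using eq t2 t3 t4 by linarith
  qed
qed

lemma part2:
  fixes p r :: nat
  assumes pr: "prime p" and po: "odd p" and ro: "odd r" and c8: "[int p = -3] (mod 8)"
  shows "(let M = vector [vector [4 / real p ^ r, 1, 0, 0],
                       vector [1, (real p ^ r + 3) / 4, 1, 0],
                       vector [0, 1, 2, 1],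
                       vector [0, 0, 1, 2]] :: real^4^4;
           K = matrix_inv M
       in invertible M \<and> even_integral_sym K \<and> pos_def K \<and> iso_A K p r)"
proof -
  have "[int p ^ r = (-3)^r] (mod 8)" by (rule cong_pow[OF c8])
  moreover have "(-3::int)^r = - (3^r)" using ro by simp
  moreover have "[- ((3::int)^r) = - 3] (mod 8)" using pow3[OF ro] by (simp add: cong_minus_minus_iff)
  ultimately have "[int p ^ r = -3] (mod 8)" using cong_trans by metis
  then have "8 dvd int p ^ r + 3" by (simp add: cong_iff_dvd_diff)
  then obtain j where j: "int p ^ r + 3 = 8*j" by blast
  define Q where "Q = real p ^ r"
  have Qj: "Q = 8 * of_int j - 3"
  proof -
    have "Q = of_int (int p ^ r)" by (simp add: Q_def)
    also have "\<dots> = of_int (8*j - 3)"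
    proof -
      have "int p ^ r = 8*j - 3" using j by linarith
      then show ?thesis by (simp only:)
    qed
    finally show ?thesis by simp
  qed
  have ppos: "p > 0" using pr prime_gt_0_nat by blast
  have Qpos: "Q > 0" using ppos by (simp add: Q_def)
  define M where "M = (vector [vector [4 / Q, 1, 0, 0],
                       vector [1, (Q + 3) / 4, 1, 0],
                       vector [0, 1, 2, 1],
                       vector [0, 0, 1, 2]] :: real^4^4)"
  define K where "K = (vector [vector [Q*(3*Q+1)/4, -3*Q, 2*Q, -Q],
                       vector [-3*Q, 12, -8, 4],
                       vector [2*Q, -8, 6, -3],
                       vector [-Q, 4, -3, 2]] :: real^4^4)"
  have MK: "M ** K = mat 1" using Qpos
    by (simp add: M_def K_def vec_eq_iff forall_4 matrix_matrix_mult_def sum_4 mat_def field_simps)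
  have inv: "invertible M" "matrix_inv M = K" using inv_eq[OF MK] by auto
  have e1: "Q*(3*Q+1)/4 = of_int ((8*j-3)*(6*j-2))" by (simp add: Qj field_simps)
  have e2': "(8 * real_of_int j - 3) * (6 * real_of_int j - 2) / 2 = of_int ((8*j-3)*(3*j-1))"
    by (simp add: field_simps)
  have e2: "(8 * real_of_int j - 3) * (6 * real_of_int j - 2) / 2 \<in> \<int>"
    by (metis e2' Ints_of_int)
  have QZ: "Q \<in> \<int>" using Qj by simp
  have e3: "(Q+3)/4 = of_int (2*j)" by (simp add: Qj field_simps)
  have eis: "even_integral_sym K"
    unfolding even_integral_sym_def
    using QZ by (simp add: K_def vec_eq_iff forall_4 transpose_def e1 e2 Ints_mult Ints_minus)
  have pd: "pos_def K"
  proof (rule posdef_from_inv[OF MK])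
    fix y :: "real^4" assume "y \<noteq> 0"
    then have nz: "y$1 \<noteq> 0 \<or> y$2 \<noteq> 0 \<or> y$3 \<noteq> 0 \<or> y$4 \<noteq> 0" by (simp add: vec_eq_iff forall_4)
    have "y \<bullet> (M *v y) = 4/Q*(y$1)^2 + 2*(y$1)*(y$2) + (Q+3)/4*(y$2)^2 + 2*(y$2)*(y$3)
        + 2*(y$3)^2 + 2*(y$3)*(y$4) + 2*(y$4)^2"
      by (simp add: M_def inner_vec_def sum_4 matrix_vector_mult_def power2_eq_square algebra_simps)
    then show "y \<bullet> (M *v y) > 0" using pos4[OF Qpos nz] by simp
  qed
  have iso: "iso_A K p r"
    unfolding iso_A_def
  proof (intro exI conjI)
    show "coprime (2::int) (int p)" by (rule cop2[OF pr po])
    show "Legendre (2*2) (int p) = 1" using leg4[OF pr po] by simp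
    show "disc_iso_cyclic K (int p ^ r) (of_int 2 / real p ^ r)"
    proof (rule disc_generic[OF MK, where jj=1 and t=4 and a=1])
      show "int p ^ r > 0" using ppos by simp
      show "M$1$1 = of_int 4 / of_int (int p ^ r)" by (simp add: M_def Q_def)
      show "M$i$1 \<in> \<int>" if "i \<noteq> 1" for i
        using that exhaust_4[of i] by (auto simp: M_def)
      show "M$i$j \<in> \<int>" if "j \<noteq> 1" for i j
        using that exhaust_4[of i] exhaust_4[of j] by (auto simp: M_def e3)
      show "coprime (1*4) (int p ^ r)" using cop4[OF pr po] by simp
      show "(of_int 1)^2 * M$1$1 / 2 - of_int 2 / real p ^ r \<in> \<int>"
        by (simp add: M_def Q_def)
    qed
  qed
  show ?thesis unfolding Let_def Q_def[symmetric] M_def[symmetric] inv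
    using inv eis pd iso by blast
qed



lemma pos2b:
  fixes Q a b :: real assumes Q: "Q > 0" and nz: "a \<noteq> 0 \<or> b \<noteq> 0"
  shows "2/Q*a^2 + 2*a*b + (Q+1)/2*b^2 > 0"
proof -
  have eq: "2/Q*a^2 + 2*a*b + (Q+1)/2*b^2 = (2*a + Q*b)^2/(2*Q) + b^2/2"
    using Q by (simp add: field_simps power2_eq_square)
  show ?thesis
  proof (cases "b = 0")
    case True
    then have "a \<noteq> 0" using nz by simp
    then show ?thesis using eq True Q by simp
  next
    case False
    have "(2*a + Q*b)^2/(2*Q) \<ge> 0" using Q by simp
    moreover have "b^2/2 > 0" using False by simp
    ultimately show ?thesis using eq by linarith
  qed
qed

lemma part3:
  fixes p r :: nat
  assumes pr: "prime p" and po: "odd p" and ro: "odd r" and c8: "[int p = 3] (mod 8)"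
  shows "(let M = vector [vector [2 / real p ^ r, 1],
                       vector [1, (real p ^ r + 1) / 2]] :: real^2^2;
           K = matrix_inv M
       in invertible M \<and> even_integral_sym K \<and> pos_def K \<and> iso_B K p r)"
proof -
  have "[int p ^ r = 3^r] (mod 8)" by (rule cong_pow[OF c8])
  then have "[int p ^ r = 3] (mod 8)" using pow3[OF ro] cong_trans by blast
  then have "8 dvd int p ^ r - 3" by (simp add: cong_iff_dvd_diff)
  then obtain j where j: "int p ^ r - 3 = 8*j" by blast
  define Q where "Q = real p ^ r"
  have Qj: "Q = 8 * of_int j + 3"
  proof -
    have "Q = of_int (int p ^ r)" by (simp add: Q_def)
    also have "\<dots> = of_int (8*j + 3)"
    proof -
      have "int p ^ r = 8*j + 3" using j by linarith
      then show ?thesis by (simp only:)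
    qed
    finally show ?thesis by simp
  qed
  have ppos: "p > 0" using pr prime_gt_0_nat by blast
  have Qpos: "Q > 0" using ppos by (simp add: Q_def)
  define M where "M = (vector [vector [2 / Q, 1], vector [1, (Q + 1) / 2]] :: real^2^2)"
  define K where "K = (vector [vector [Q*(Q+1)/2, -Q], vector [-Q, 2]] :: real^2^2)"
  have MK: "M ** K = mat 1" using Qpos
    by (simp add: M_def K_def vec_eq_iff forall_2 matrix_matrix_mult_def sum_2 mat_def field_simps)
  have inv: "invertible M" "matrix_inv M = K" using inv_eq[OF MK] by auto
  have e1: "Q*(Q+1)/2 = of_int ((8*j+3)*(4*j+2))" by (simp add: Qj field_simps)
  have e2': "(8 * real_of_int j + 3) * (4 * real_of_int j + 2) / 2 = of_int ((8*j+3)*(2*j+1))"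
    by (simp add: field_simps)
  have e2: "(8 * real_of_int j + 3) * (4 * real_of_int j + 2) / 2 \<in> \<int>"
    by (metis e2' Ints_of_int)
  have QZ: "Q \<in> \<int>" using Qj by simp
  have e3: "(Q+1)/2 = of_int (4*j+2)" by (simp add: Qj field_simps)
  have eis: "even_integral_sym K"
    unfolding even_integral_sym_def
    using QZ by (simp add: K_def vec_eq_iff forall_2 transpose_def e1 e2 Ints_mult Ints_minus)
  have pd: "pos_def K"
  proof (rule posdef_from_inv[OF MK])
    fix y :: "real^2" assume "y \<noteq> 0"
    then have nz: "y$1 \<noteq> 0 \<or> y$2 \<noteq> 0" by (simp add: vec_eq_iff forall_2)
    have "y \<bullet> (M *v y) = 2/Q*(y$1)^2 + 2*(y$1)*(y$2) + (Q+1)/2*(y$2)^2"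
      by (simp add: M_def inner_vec_def sum_2 matrix_vector_mult_def power2_eq_square algebra_simps)
    then show "y \<bullet> (M *v y) > 0" using pos2b[OF Qpos nz] by simp
  qed
  have iso: "iso_B K p r"
    unfolding iso_B_def
  proof (intro exI conjI)
    show "coprime (1::int) (int p)" by simp
    show "Legendre (2*1) (int p) = -1" using leg2[OF pr c8] by simp
    show "disc_iso_cyclic K (int p ^ r) (of_int 1 / real p ^ r)"
    proof (rule disc_generic[OF MK, where jj=1 and t=2 and a=1])
      show "int p ^ r > 0" using ppos by simp
      show "M$1$1 = of_int 2 / of_int (int p ^ r)" by (simp add: M_def Q_def)
      show "M$i$1 \<in> \<int>" if "i \<noteq> 1" for i
        using that exhaust_2[of i] by (auto simp: M_def)
      show "M$i$j \<in> \<int>" if "j \<noteq> 1" for i j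
        using that exhaust_2[of i] exhaust_2[of j] by (auto simp: M_def e3)
      show "coprime (1*2) (int p ^ r)" using cop2[OF pr po] by simp
      show "(of_int 1)^2 * M$1$1 / 2 - of_int 1 / real p ^ r \<in> \<int>"
        by (simp add: M_def Q_def)
    qed
  qed
  show ?thesis unfolding Let_def Q_def[symmetric] M_def[symmetric] inv
    using inv eis pd iso by blast
qed

lemma pos3:
  fixes Q a b c :: real assumes Q: "Q > 0" and nz: "a \<noteq> 0 \<or> b \<noteq> 0 \<or> c \<noteq> 0"
  shows "3/Q*a^2 + 2*a*b + (Q+2)/3*b^2 + 2*b*c + 2*c^2 > 0"
proof -
  have eq: "3/Q*a^2 + 2*a*b + (Q+2)/3*b^2 + 2*b*c + 2*c^2
      = (3*a + Q*b)^2/(3*Q) + 2/3*(b + 3/2*c)^2 + c^2/2"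
    using Q by (simp add: field_simps power2_eq_square)
  have t1: "(3*a + Q*b)^2/(3*Q) \<ge> 0" using Q by simp
  have t2: "2/3*(b + 3/2*c)^2 \<ge> 0" by simp
  have t3: "c^2/2 \<ge> 0" by simp
  consider "c \<noteq> 0" | "c = 0" "b \<noteq> 0" | "c = 0" "b = 0" "a \<noteq> 0"
    using nz by blast
  then show ?thesis
  proof cases
    case 1 then have "c^2/2 > 0" by simp
    then show ?thesis using eq t1 t2 by linarith
  next
    case 2 then have "2/3*(b + 3/2*c)^2 > 0" by simp
    then show ?thesis using eq t1 t3 by linarith
  next
    case 3 then have "(3*a + Q*b)^2/(3*Q) > 0" using Q by simp
    then show ?thesis using eq t2 t3 by linarith
  qed
qed

lemma part4:
  fixes s :: nat
  assumes se: "even s" and s2: "s \<ge> 2"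
  shows "(let M = vector [vector [3 / 2 ^ s, 1, 0],
                       vector [1, (2 ^ s + 2) / 3, 1],
                       vector [0, 1, 2]] :: real^3^3;
           K = matrix_inv M
       in invertible M \<and> even_integral_sym K \<and> pos_def K \<and> iso_D K s)"
proof -
  obtain t where t: "s = 2 * t" using se by blast
  have "[(4::int)^t = 1^t] (mod 3)" by (rule cong_pow) (simp add: cong_def)
  then have "[(2::int)^s = 1] (mod 3)" by (simp add: t power_mult)
  then have "3 dvd (2::int)^s - 1" by (simp add: cong_iff_dvd_diff)
  then obtain i where i: "(2::int)^s - 1 = 3*i" by blast
  define Q :: real where "Q = 2 ^ s"
  have Qi: "Q = 3 * of_int i + 1"
  proof -
    have "Q = of_int ((2::int)^s)" by (simp add: Q_def)
    also have "\<dots> = of_int (3*i + 1)"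
    proof -
      have "(2::int)^s = 3*i+1" using i by linarith
      then show ?thesis by (simp only:)
    qed
    finally show ?thesis by simp
  qed
  have sh: "s = Suc (s - 1)" using s2 by simp
  define h :: int where "h = 2^(s-1)"
  have Qh: "Q = 2 * of_int h"
  proof -
    have "Q = 2^(Suc (s-1))" using sh Q_def by metis
    then show ?thesis by (simp add: h_def)
  qed
  have Qpos: "Q > 0" by (simp add: Q_def)
  define M where "M = (vector [vector [3 / Q, 1, 0],
                       vector [1, (Q + 2) / 3, 1],
                       vector [0, 1, 2]] :: real^3^3)"
  define K where "K = (vector [vector [Q*(2*Q+1)/3, -2*Q, Q],
                       vector [-2*Q, 6, -3],
                       vector [Q, -3, 2]] :: real^3^3)"
  have MK: "M ** K = mat 1" using Qpos
    by (simp add: M_def K_def vec_eq_iff forall_3 matrix_matrix_mult_def sum_3 mat_def field_simps)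
  have inv: "invertible M" "matrix_inv M = K" using inv_eq[OF MK] by auto
  have k11: "Q*(2*Q+1)/3 = 2 * of_int (h*(2*i+1))"
  proof -
    have "Q*(2*Q+1)/3 = Q * (2 * of_int i + 1)" by (simp add: Qi field_simps)
    also have "\<dots> = 2 * of_int (h*(2*i+1))" by (simp add: Qh)
    finally show ?thesis .
  qed
  have QZ: "Q \<in> \<int>" using Qi by simp
  have e3: "(Q+2)/3 = of_int (i+1)" by (simp add: Qi field_simps)
  have eis: "even_integral_sym K"
    unfolding even_integral_sym_def
    using QZ by (simp add: K_def vec_eq_iff forall_3 transpose_def k11 Ints_mult Ints_minus)
  have pd: "pos_def K"
  proof (rule posdef_from_inv[OF MK])
    fix y :: "real^3" assume "y \<noteq> 0"
    then have nz: "y$1 \<noteq> 0 \<or> y$2 \<noteq> 0 \<or> y$3 \<noteq> 0" by (simp add: vec_eq_iff forall_3)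
    have "y \<bullet> (M *v y) = 3/Q*(y$1)^2 + 2*(y$1)*(y$2) + (Q+2)/3*(y$2)^2 + 2*(y$2)*(y$3) + 2*(y$3)^2"
      by (simp add: M_def inner_vec_def sum_3 matrix_vector_mult_def power2_eq_square algebra_simps)
    then show "y \<bullet> (M *v y) > 0" using pos3[OF Qpos nz] by simp
  qed
  obtain a :: int where a: "odd a" "2^(s+1) dvd 3*a^2+5" using sq2adic[of "s+1"] s2 by auto
  then obtain w where w: "3*a^2+5 = 2^(s+1)*w" by blast
  have iso: "iso_D K s"
    unfolding iso_D_def
  proof (rule disc_generic[OF MK, where jj=1 and t=3 and a=a])
    show "(2::int) ^ s > 0" by simp
    show "M$1$1 = of_int 3 / of_int (2 ^ s)" by (simp add: M_def Q_def)
    show "M$i$1 \<in> \<int>" if "i \<noteq> 1" for i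
      using that exhaust_3[of i] by (auto simp: M_def)
    show "M$i$j \<in> \<int>" if "j \<noteq> 1" for i j
      using that exhaust_3[of i] exhaust_3[of j] by (auto simp: M_def e3)
    show "coprime (a*3) (2 ^ s)" using a(1) by simp
    have "(of_int a)^2 * M$1$1 / 2 - (-5 / 2 ^ (s+1)) = (of_int (3*a^2+5) :: real) / 2^(s+1)"
      by (simp add: M_def Q_def field_simps)
    also have "\<dots> = of_int w" by (simp add: w)
    finally show "(of_int a)^2 * M$1$1 / 2 - (-5 / 2 ^ (s+1)) \<in> \<int>" by simp
  qed
  show ?thesis unfolding Let_def Q_def[symmetric] M_def[symmetric] inv
    using inv eis pd iso by blast
qed


theorem mainTheorem6:
  fixes p r :: nat
  assumes "prime p" and "odd p" and "odd r"
  shows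
   "([int p = -1] (mod 8) \<longrightarrow>
      (let M = vector [vector [4 / real p ^ r, 1],
                       vector [1, (real p ^ r + 1) / 4]] :: real^2^2;
           K = matrix_inv M
       in invertible M \<and> even_integral_sym K \<and> pos_def K \<and> iso_A K p r)) \<and>
    ([int p = -3] (mod 8) \<longrightarrow>
      (let M = vector [vector [4 / real p ^ r, 1, 0, 0],
                       vector [1, (real p ^ r + 3) / 4, 1, 0],
                       vector [0, 1, 2, 1],
                       vector [0, 0, 1, 2]] :: real^4^4;
           K = matrix_inv M
       in invertible M \<and> even_integral_sym K \<and> pos_def K \<and> iso_A K p r)) \<and>
    ([int p = 3] (mod 8) \<longrightarrow>
      (let M = vector [vector [2 / real p ^ r, 1],
                       vector [1, (real p ^ r + 1) / 2]] :: real^2^2;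
           K = matrix_inv M
       in invertible M \<and> even_integral_sym K \<and> pos_def K \<and> iso_B K p r)) \<and>
    (\<forall>s::nat. even s \<and> s \<ge> 2 \<longrightarrow>
      (let M = vector [vector [3 / 2 ^ s, 1, 0],
                       vector [1, (2 ^ s + 2) / 3, 1],
                       vector [0, 1, 2]] :: real^3^3;
           K = matrix_inv M
       in invertible M \<and> even_integral_sym K \<and> pos_def K \<and> iso_D K s))"
  using part1[OF assms] part2[OF assms] part3[OF assms] part4 by blast

end
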